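(* Let $k$ be an odd integer with $k\ge 5$, let $D$ be a strong $k$-quasi-transitive digraph with $\mathrm{diam}(D)\ge k+2$, let $u,v\in V(D)$ with $d(u,v)=k+2$, and let $P=x_0x_1\ldots x_{k+2}$ be a shortest $(u,v)$-path with $x_0=u$, $x_{k+2}=v$. Let $O(P)=\{x_1,x_3,\ldots,x_{k+2}\}$, $E(P)=\{x_0,x_2,\ldots,x_{k+1}\}$, $I=\{x\in V(D)\setminus V(P): x\Rightarrow V(P)\}$, $W=\{x\in V(D)\setminus V(P): V(P)\Rightarrow x\}$ and $B=V(D)\setminus(V(P)\cup I\cup W)$. For any $x\in V(D)\setminus V(P)$: (1) Suppose $x\in I$. If $x\rightarrow x_i$ for some $x_i\in E(P)$, then $x\mapsto E(P)$; if $x\rightarrow x_i$ for some $x_i\in O(P)$, then $x\mapsto O(P)$. (2) Suppose $x\in W$. If $x_i\rightarrow x$ for some $x_i\in E(P)$, then $E(P)\mapsto x$; if $x_i\rightarrow x$ for some $x_i\in O(P)$, then $O(P)\mapsto x$. (3) Suppose $x\in B$. If $x$ is adjacent to some vertex of $O(P)$, then either $x$ is adjacent to every vertex of $O(P)$, or there exist $x_s,x_t\in O(P)$ with $3\le t<s\le k$ such that $\{x_s,x_{s+2},\ldots,x_{k+2}\}\mapsto x\mapsto\{x_1,x_3,\ldots,x_t\}$. If $x$ is adjacent to some vertex of $E(P)$, then either $x$ is adjacent to every vertex of $E(P)$, or there exist $x_s,x_t\in E(P)$ with $2\le t<s\le k-1$ such that $\{x_s,x_{s+2},\ldots,x_{k+1}\}\mapsto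 x\mapsto\{x_0,x_2,\ldots,x_t\}$.
   Context: All digraphs are finite, without loops or multiple arcs (opposite arcs allowed). $x\rightarrow y$ means $xy\in A(D)$; $x,y$ are adjacent if $x\rightarrow y$ or $y\rightarrow x$. For disjoint vertex sets $X,Y$ (singletons identified with vertices): $X\rightarrow Y$ means every vertex of $X$ dominates every vertex of $Y$; $X\Rightarrow Y$ means there is no arc from $Y$ to $X$; $X\mapsto Y$ means both $X\rightarrow Y$ and $X\Rightarrow Y$. For $k\ge 2$, $D$ is $k$-quasi-transitive if for every path $x_0x_1\ldots x_k$ of length $k$, $x_0$ and $x_k$ are adjacent. $d(x,y)$ is the length of a shortest $(x,y)$-path, $\mathrm{diam}(D)=\max_{x,y}d(x,y)$. *)

theory Defs
  imports Main
begin

definition digraph :: "'a set \<Rightarrow> ('a \<times> 'a) set \<Rightarrow> bool" where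
  "digraph V A \<longleftrightarrow> finite V \<and> A \<subseteq> V \<times> V \<and> (\<forall>x. (x, x) \<notin> A)"

definition adjacent :: "('a \<times> 'a) set \<Rightarrow> 'a \<Rightarrow> 'a \<Rightarrow> bool" where
  "adjacent A x y \<longleftrightarrow> (x, y) \<in> A \<or> (y, x) \<in> A"

text \<open>A path is a nonempty list of distinct vertices, consecutive ones joined by arcs;
  its length is the number of arcs, i.e. length xs - 1.\<close>

definition is_path :: "'a set \<Rightarrow> ('a \<times> 'a) set \<Rightarrow> 'a list \<Rightarrow> bool" where
  "is_path V A xs \<longleftrightarrow> xs \<noteq> [] \<and> distinct xs \<and> set xs \<subseteq> V \<and>
     (\<forall>i. Suc i < length xs \<longrightarrow> (xs ! i, xs ! Suc i) \<in> A)"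

definition path_from_to :: "'a set \<Rightarrow> ('a \<times> 'a) set \<Rightarrow> 'a list \<Rightarrow> 'a \<Rightarrow> 'a \<Rightarrow> bool" where
  "path_from_to V A xs x y \<longleftrightarrow> is_path V A xs \<and> hd xs = x \<and> last xs = y"

definition k_quasi_transitive :: "nat \<Rightarrow> 'a set \<Rightarrow> ('a \<times> 'a) set \<Rightarrow> bool" where
  "k_quasi_transitive k V A \<longleftrightarrow>
     (\<forall>xs. is_path V A xs \<and> length xs = k + 1 \<longrightarrow> adjacent A (hd xs) (last xs))"

definition strong :: "'a set \<Rightarrow> ('a \<times> 'a) set \<Rightarrow> bool" where
  "strong V A \<longleftrightarrow> (\<forall>x\<in>V. \<forall>y\<in>V. \<exists>xs. path_from_to V A xs x y)"

definition dist :: "'a set \<Rightarrow> ('a \<times> 'a) set \<Rightarrow> 'a \<Rightarrow> 'a \<Rightarrow> nat" where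
  "dist V A x y = (LEAST n. \<exists>xs. path_from_to V A xs x y \<and> length xs = Suc n)"

definition diam :: "'a set \<Rightarrow> ('a \<times> 'a) set \<Rightarrow> nat" where
  "diam V A = Max {dist V A x y | x y. x \<in> V \<and> y \<in> V}"

text \<open>X \<rightarrow> Y, X \<Rightarrow> Y, X \<mapsto> Y for vertex sets.\<close>

definition dominates :: "('a \<times> 'a) set \<Rightarrow> 'a set \<Rightarrow> 'a set \<Rightarrow> bool" where
  "dominates A X Y \<longleftrightarrow> (\<forall>x\<in>X. \<forall>y\<in>Y. (x, y) \<in> A)"

definition no_back_arc :: "('a \<times> 'a) set \<Rightarrow> 'a set \<Rightarrow> 'a set \<Rightarrow> bool" where
  "no_back_arc A X Y \<longleftrightarrow> (\<forall>x\<in>X. \<forall>y\<in>Y. (y, x) \<notin> A)"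

definition maps_to :: "('a \<times> 'a) set \<Rightarrow> 'a set \<Rightarrow> 'a set \<Rightarrow> bool" where
  "maps_to A X Y \<longleftrightarrow> dominates A X Y \<and> no_back_arc A X Y"

end

theory Submission imports Defs begin

fun ch :: "('a \<times> 'a) set \<Rightarrow> 'a list \<Rightarrow> bool" where
  "ch A [] = True"
| "ch A [a] = True"
| "ch A (a # b # r) = ((a, b) \<in> A \<and> ch A (b # r))"

lemma ch_nth: "ch A xs \<longleftrightarrow> (\<forall>i. Suc i < length xs \<longrightarrow> (xs ! i, xs ! Suc i) \<in> A)"
proof (induction A xs rule: ch.induct)
  case (3 A a b r)
  show ?case
  proof
    assume h: "ch A (a # b # r)"
    show "\<forall>i. Suc i < length (a # b # r) \<longrightarrow> ((a # b # r) ! i, (a # b # r) ! Suc i) \<in> A"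
    proof (intro allI impI)
      fix i assume "Suc i < length (a # b # r)"
      then show "((a # b # r) ! i, (a # b # r) ! Suc i) \<in> A"
        using h 3 by (cases i) auto
    qed
  next
    assume h: "\<forall>i. Suc i < length (a # b # r) \<longrightarrow> ((a # b # r) ! i, (a # b # r) ! Suc i) \<in> A"
    have "(a, b) \<in> A" using h[rule_format, of 0] by simp
    moreover have "ch A (b # r)" unfolding 3
    proof (intro allI impI)
      fix i assume "Suc i < length (b # r)"
      then show "((b # r) ! i, (b # r) ! Suc i) \<in> A" using h[rule_format, of "Suc i"] by simp
    qed
    ultimately show "ch A (a # b # r)" by simp
  qed
qed auto

lemma ch_Cons: "ch A (a # ys) \<longleftrightarrow> ch A ys \<and> (ys \<noteq> [] \<longrightarrow> (a, hd ys) \<in> A)"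
  by (cases ys) auto

lemma ch_append: "ch A (xs @ ys) \<longleftrightarrow> ch A xs \<and> ch A ys \<and> (xs \<noteq> [] \<longrightarrow> ys \<noteq> [] \<longrightarrow> (last xs, hd ys) \<in> A)"
  by (induction A xs rule: ch.induct) (auto simp: ch_Cons)


locale lsetup =
  fixes V :: "'a set" and A :: "('a \<times> 'a) set" and k :: nat and P :: "'a list" and x :: 'a
  assumes dg: "digraph V A" and oddk: "odd k" and k5: "k \<ge> 5"
    and qt: "k_quasi_transitive k V A"
    and pth: "is_path V A P" and lenP: "length P = k + 3"
    and xV: "x \<in> V" and xP: "x \<notin> set P"
    and minl: "\<And>ys. path_from_to V A ys (P ! 0) (P ! (k+2)) \<Longrightarrow> k + 3 \<le> length ys"
begin

definition q :: "nat \<Rightarrow> 'a" where "q i = (if i < k + 3 then P ! i else x)"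

lemma q_x[simp]: "q (k+3) = x" by (simp add: q_def)

lemma q_inj: "inj_on q {..k+3}"
proof (rule inj_onI)
  fix i j assume i: "i \<in> {..k+3}" and j: "j \<in> {..k+3}" and e: "q i = q j"
  have dP: "distinct P" using pth by (simp add: is_path_def)
  show "i = j"
  proof (cases "i < k+3")
    case True
    show ?thesis
    proof (cases "j < k+3")
      case True
      with \<open>i < k+3\<close> e show ?thesis using dP lenP by (simp add: q_def nth_eq_iff_index_eq)
    next
      case False
      then have "j = k+3" using j by simp
      then show ?thesis using e \<open>i < k+3\<close> xP lenP by (auto simp: q_def)
    qed
  next
    case False
    then have ii: "i = k+3" using i by simp
    show ?thesis
    proof (cases "j < k+3")
      case True
      then show ?thesis using e ii xP lenP by (auto simp: q_def)
    next
      case False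
      then show ?thesis using j ii by simp
    qed
  qed
qed

lemma q_V: "q i \<in> V"
  using pth xV lenP by (auto simp: q_def is_path_def)

lemma q_arc: "Suc i \<le> k + 2 \<Longrightarrow> (q i, q (Suc i)) \<in> A"
  using pth lenP by (auto simp: q_def is_path_def)

lemma ch_seg: "b \<le> k + 3 \<Longrightarrow> ch A (map q [a..<b])"
  unfolding ch_nth by (auto simp: q_arc)

lemma path_q:
  assumes "distinct is" "is \<noteq> []" "\<forall>i\<in>set is. i \<le> k+3" "ch A (map q is)"
  shows "is_path V A (map q is)"
proof -
  have "inj_on q (set is)" using q_inj assms(3) by (auto intro: inj_on_subset)
  then show ?thesis using assms q_V unfolding is_path_def ch_nth[symmetric]
    by (auto simp: distinct_map)
qed

lemma qt_q:
  assumes "distinct is" "\<forall>i\<in>set is. i \<le> k+3" "ch A (map q is)" "length is = k + 1"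
  shows "adjacent A (q (hd is)) (q (last is))"
proof -
  have ne: "is \<noteq> []" using assms(4) by auto
  have "is_path V A (map q is)" using path_q assms ne by blast
  then have "adjacent A (hd (map q is)) (last (map q is))"
    using qt assms(4) unfolding k_quasi_transitive_def by auto
  then show ?thesis using ne by (simp add: hd_map last_map)
qed

lemma min_q:
  assumes "distinct is" "is \<noteq> []" "\<forall>i\<in>set is. i \<le> k+3" "ch A (map q is)"
    "hd is = 0" "last is = k + 2"
  shows "k + 3 \<le> length is"
proof -
  have "is_path V A (map q is)" using path_q assms by blast
  moreover have "hd (map q is) = P ! 0" using assms(2,5) by (simp add: hd_map q_def)
  moreover have "last (map q is) = P ! (k+2)" using assms(2,6) by (simp add: last_map q_def)
  ultimately show ?thesis using minl[of "map q is"] by (simp add: path_from_to_def)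
qed

end
context lsetup begin

lemma last_upt': "a < b \<Longrightarrow> last [a..<b] = b - 1"
  by (simp del: upt_Suc)

lemmas chs = ch_Cons ch_append ch_seg hd_map last_map last_upt' hd_upt

lemma noshort: assumes "(q i, q j) \<in> A" "i + 2 \<le> j" "j \<le> k + 2" shows False
proof -
  let ?is = "[0..<Suc i] @ [j..<k+3]"
  have c: "ch A (map q ?is)" using assms by (simp add: chs del: upt_Suc)
  have "k + 3 \<le> length ?is"
    using assms by (intro min_q[OF _ _ _ c]) (auto simp: hd_append last_append del: upt_Suc)
  then show False using assms by simp
qed

lemma noshort2: assumes "(q i, x) \<in> A" "(x, q j) \<in> A" "i + 3 \<le> j" "j \<le> k + 2" shows False
proof -
  let ?is = "[0..<Suc i] @ [k+3] @ [j..<k+3]"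
  have c: "ch A (map q ?is)" using assms by (simp add: chs del: upt_Suc)
  have "k + 3 \<le> length ?is"
    using assms by (intro min_q[OF _ _ _ c]) (auto simp: hd_append last_append del: upt_Suc)
  then show False using assms by simp
qed

lemma adj_sym: "adjacent A a b \<longleftrightarrow> adjacent A b a" by (auto simp: adjacent_def)

lemma karc: assumes "c \<le> 2" shows "(q (c + k), q c) \<in> A"
proof -
  let ?is = "[c..<c+k+1]"
  have c: "ch A (map q ?is)" using assms by (simp add: chs del: upt_Suc)
  have "adjacent A (q (hd ?is)) (q (last ?is))"
    using assms by (intro qt_q[OF _ _ c]) auto
  then have "adjacent A (q c) (q (c+k))" by (simp del: upt_Suc add: last_upt')
  moreover have "(q c, q (c+k)) \<notin> A" using noshort[of c "c+k"] assms k5 by auto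
  ultimately show ?thesis by (auto simp: adjacent_def)
qed

lemma narc: "(q (k+2), q 0) \<in> A"
proof -
  let ?is = "[k+2] @ [2..<k+1] @ [0]"
  have a1: "(q (k+2), q 2) \<in> A" "(q k, q 0) \<in> A" using karc[of 2] karc[of 0] by (auto simp: add.commute)
  have c: "ch A (map q ?is)" using a1 k5 by (simp add: chs del: upt_Suc)
  have "adjacent A (q (hd ?is)) (q (last ?is))"
    using k5 by (intro qt_q[OF _ _ c]) auto
  then have "adjacent A (q (k+2)) (q 0)" by simp
  moreover have "(q 0, q (k+2)) \<notin> A" using noshort[of 0 "k+2"] by auto
  ultimately show ?thesis by (auto simp: adjacent_def)
qed

end
context lsetup begin

lemmas chs2 = chs last_append hd_append

lemma R1: assumes "(x, q i) \<in> A" "2 \<le> i" "i \<le> k + 2" shows "adjacent A x (q (i-2))"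
proof (cases "i \<le> k")
  case True
  let ?is = "[k+3] @ [i..<k+1] @ [0..<i-1]"
  have a: "(q k, q 0) \<in> A" using karc[of 0] by simp
  have c: "ch A (map q ?is)" using assms a True by (simp add: chs del: upt_Suc)
  have "adjacent A (q (hd ?is)) (q (last ?is))" using assms True by (intro qt_q[OF _ _ c]) (auto simp del: upt_Suc)
  then show ?thesis using assms by (simp add: chs2 numeral_2_eq_2 del: upt_Suc)
next
  case False
  let ?is = "[k+3, i] @ [i-k..<i-1]"
  have a: "(q i, q (i-k)) \<in> A" using karc[of "i-k"] False assms by simp
  have c: "ch A (map q ?is)" using assms a False k5 by (simp add: chs del: upt_Suc)
  have "adjacent A (q (hd ?is)) (q (last ?is))" using assms False k5 by (intro qt_q[OF _ _ c]) (auto simp del: upt_Suc)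
  moreover have "i - k < i - 1" "2 \<le> i" using False k5 assms by simp_all
  then have "last ?is = i - 2" by (auto simp del: upt_Suc simp add: last_upt' numeral_2_eq_2)
  ultimately show ?thesis by simp
qed

lemma R6: assumes "(x, q i) \<in> A" "4 \<le> i" "i \<le> k + 2" shows "adjacent A x (q (i-4))"
proof -
  let ?is = "[k+3] @ [i..<k+3] @ [0..<i-3]"
  have c: "ch A (map q ?is)" using assms narc by (simp add: chs del: upt_Suc)
  have "adjacent A (q (hd ?is)) (q (last ?is))" using assms by (intro qt_q[OF _ _ c]) (auto simp del: upt_Suc)
  then show ?thesis using assms by (simp add: chs2 del: upt_Suc)
qed

lemma R3: assumes "(x, q i) \<in> A" "i \<le> 3" shows "adjacent A x (q (i+k-1))"
proof -
  let ?is = "[k+3] @ [i..<i+k]"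
  have c: "ch A (map q ?is)" using assms k5 by (simp add: chs del: upt_Suc)
  have "adjacent A (q (hd ?is)) (q (last ?is))" using assms by (intro qt_q[OF _ _ c]) (auto simp del: upt_Suc)
  then show ?thesis using assms k5 by (simp add: chs2 del: upt_Suc)
qed

lemma R2: assumes "(q i, x) \<in> A" "i + 2 \<le> k + 2" shows "adjacent A x (q (i+2))"
proof (cases "i + 2 \<le> k")
  case True
  let ?is = "[i+2..<k+1] @ [0..<i+1] @ [k+3]"
  have a: "(q k, q 0) \<in> A" using karc[of 0] by simp
  have c: "ch A (map q ?is)" using assms a True by (simp add: chs del: upt_Suc)
  have "adjacent A (q (hd ?is)) (q (last ?is))" using assms True by (intro qt_q[OF _ _ c]) (auto simp del: upt_Suc)
  then show ?thesis using assms True by (simp add: chs2 adj_sym del: upt_Suc)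
next
  case False
  let ?is = "[i+2] @ [i+2-k..<i+1] @ [k+3]"
  have a: "(q (i+2), q (i+2-k)) \<in> A" using karc[of "i+2-k"] False assms by simp
  have c: "ch A (map q ?is)" using assms a False k5 by (simp add: chs del: upt_Suc)
  have "adjacent A (q (hd ?is)) (q (last ?is))" using assms False k5 by (intro qt_q[OF _ _ c]) (auto simp del: upt_Suc)
  then show ?thesis using assms False k5 by (simp add: chs2 adj_sym del: upt_Suc)
qed

lemma R7: assumes "(q i, x) \<in> A" "i + 4 \<le> k + 2" shows "adjacent A x (q (i+4))"
proof -
  let ?is = "[i+4..<k+3] @ [0..<i+1] @ [k+3]"
  have c: "ch A (map q ?is)" using assms narc by (simp add: chs del: upt_Suc)
  have "adjacent A (q (hd ?is)) (q (last ?is))" using assms by (intro qt_q[OF _ _ c]) (auto simp del: upt_Suc)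
  then show ?thesis using assms by (simp add: chs2 adj_sym del: upt_Suc)
qed

lemma R4: assumes "(q i, x) \<in> A" "k - 1 \<le> i" "i \<le> k + 2" shows "adjacent A x (q (i+1-k))"
proof -
  let ?is = "[i+1-k..<i+1] @ [k+3]"
  have c: "ch A (map q ?is)" using assms k5 by (simp add: chs del: upt_Suc)
  have "adjacent A (q (hd ?is)) (q (last ?is))" using assms k5 by (intro qt_q[OF _ _ c]) (auto simp del: upt_Suc)
  moreover have "\<not> Suc i \<le> Suc i - k" using k5 assms by simp
  ultimately show ?thesis using assms k5 by (simp add: chs2 adj_sym del: upt_Suc)
qed

end

locale cmb =
  fixes out inn :: "nat \<Rightarrow> bool" and M :: nat
  assumes M3: "M \<ge> 3"
  and C1: "\<And>r. out r \<Longrightarrow> 1 \<le> r \<Longrightarrow> r \<le> M \<Longrightarrow> out (r-1) \<or> inn (r-1)"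
  and C6: "\<And>r. out r \<Longrightarrow> 2 \<le> r \<Longrightarrow> r \<le> M \<Longrightarrow> out (r-2) \<or> inn (r-2)"
  and C3: "\<And>r. out r \<Longrightarrow> r \<le> 1 \<Longrightarrow> out (r+M-1) \<or> inn (r+M-1)"
  and C2: "\<And>r. inn r \<Longrightarrow> r+1 \<le> M \<Longrightarrow> out (r+1) \<or> inn (r+1)"
  and C7: "\<And>r. inn r \<Longrightarrow> r+2 \<le> M \<Longrightarrow> out (r+2) \<or> inn (r+2)"
  and C4: "\<And>r. inn r \<Longrightarrow> M-1 \<le> r \<Longrightarrow> r \<le> M \<Longrightarrow> out (r-(M-1)) \<or> inn (r-(M-1))"
  and C5: "\<And>r r'. inn r \<Longrightarrow> out r' \<Longrightarrow> r \<le> M \<Longrightarrow> r' \<le> M \<Longrightarrow> r' \<le> r+1"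
begin

lemma combI:
  assumes noin: "\<forall>r\<le>M. \<not> inn r" and o: "out r0" "r0 \<le> M"
  shows "\<forall>r\<le>M. out r"
proof -
  have down: "out (r - d)" if "out r" "r \<le> M" "d \<le> r" for r d
    using that(3)
  proof (induction d)
    case 0 then show ?case using that by simp
  next
    case (Suc d)
    then have "out (r - d)" by simp
    then have "out (r - d - 1) \<or> inn (r - d - 1)" using C1[of "r-d"] Suc.prems that by simp
    then have "out (r - d - 1)" using noin that by auto
    then show ?case by simp
  qed
  have o0: "out 0" using down[OF o, of r0] o by simp
  have "out (M-1)" using C3[OF o0] noin by simp
  then have o1: "out 1" using down[of "M-1" "M-2"] M3 by simp
  have oM: "out M" using C3[OF o1] noin by simp
  show ?thesis
  proof (intro allI impI)
    fix r assume "r \<le> M"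
    then show "out r" using down[OF oM, of "M-r"] by simp
  qed
qed

lemma combW:
  assumes noout: "\<forall>r\<le>M. \<not> out r" and i: "inn r0" "r0 \<le> M"
  shows "\<forall>r\<le>M. inn r"
proof -
  have up: "inn (r + d)" if "inn r" "r + d \<le> M" for r d
    using that(2)
  proof (induction d)
    case 0 then show ?case using that by simp
  next
    case (Suc d)
    then have "inn (r + d)" by simp
    then have "out (r + d + 1) \<or> inn (r + d + 1)" using C2[of "r+d"] Suc.prems by simp
    then show ?case using noout Suc.prems by simp
  qed
  have iM: "inn M" using up[OF i(1), of "M - r0"] i by simp
  have "out (M - (M-1)) \<or> inn (M - (M-1))" using C4[OF iM] by simp
  then have i1: "inn 1" using noout M3 by simp
  have e: "1 + (M-2) = M-1" using M3 by arith
  have "inn (1 + (M-2))" by (rule up[OF i1]) (use M3 in arith)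
  then have "inn (M-1)" by (metis e)
  then have "out (M-1-(M-1)) \<or> inn (M-1-(M-1))" using C4[of "M-1"] by simp
  then have i0: "inn 0" using noout by simp
  show ?thesis using up[OF i0] by simp
qed

lemma combB:
  assumes r0: "r0 \<le> M" "out r0 \<or> inn r0"
  shows "(\<forall>r\<le>M. out r \<or> inn r) \<or>
    (out 0 \<and> \<not> inn 0 \<and> out 1 \<and> \<not> inn 1 \<and> inn (M-1) \<and> \<not> out (M-1) \<and> inn M \<and> \<not> out M)"
proof (cases "\<forall>r\<le>M. out r \<or> inn r")
  case True then show ?thesis by simp
next
  case False
  then obtain a where a: "a \<le> M" "\<not> out a" "\<not> inn a" by auto
  have i: "\<not> out r" if "a < r" "r \<le> M" for r
    using that
  proof (induction r rule: less_induct)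
    case (less r)
    show ?case
    proof
      assume o: "out r"
      consider "r = a + 1" | "r = a + 2" | "a + 3 \<le> r" using less.prems by linarith
      then show False
      proof cases
        case 1 then show False using C1[OF o] less.prems a by simp
      next
        case 2 then show False using C6[OF o] less.prems a by simp
      next
        case 3
        then have "\<not> out (r-2)" using less.IH[of "r-2"] less.prems by simp
        then have "inn (r-2)" using C6[OF o] 3 less.prems by simp
        moreover have "r - 2 \<le> M" using less.prems by simp
        ultimately have "r \<le> r - 2 + 1" using C5[OF _ o _ less.prems(2)] by blast
        then show False using 3 by linarith
      qed
    qed
  qed
  have ii0: "\<not> inn (a - Suc d)" if "d < a" for d
    using that
  proof (induction d rule: less_induct)
    case (less d)
    show ?case
    proof
      assume o: "inn (a - Suc d)"
      consider "d = 0" | "d = 1" | "2 \<le> d" by linarith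
      then show False
      proof cases
        case 1
        have "a - Suc d + 1 = a" using 1 less.prems by simp
        then show False using C2[OF o] less.prems a by simp
      next
        case 2
        have "a - Suc d + 2 = a" using 2 less.prems by simp
        then show False using C7[OF o] less.prems a by simp
      next
        case 3
        have e: "a - Suc d + 2 = a - Suc (d - 2)" using 3 less.prems by simp
        have "\<not> inn (a - Suc (d - 2))" using less.IH[of "d-2"] less.prems 3 by simp
        then have n: "\<not> inn (a - Suc d + 2)" using e by simp
        have "out (a - Suc d + 2) \<or> inn (a - Suc d + 2)" using C7[OF o] 3 a less.prems by simp
        then have "out (a - Suc d + 2)" using n by simp
        moreover have "a - Suc d \<le> M" "a - Suc d + 2 \<le> M" using a less.prems 3 by simp_all
        ultimately have "a - Suc d + 2 \<le> a - Suc d + 1" using C5[OF o] by blast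
        then show False by simp
      qed
    qed
  qed
  have ii: "\<not> inn r" if "r < a" for r
  proof -
    have "a - Suc (a - Suc r) = r" using that by simp
    then show ?thesis using ii0[of "a - Suc r"] that by simp
  qed
  have iii: "inn (r + d)" if "inn r" "a < r" "r + d \<le> M" for r d
    using that(3)
  proof (induction d)
    case 0 then show ?case using that by simp
  next
    case (Suc d)
    then have "inn (r + d)" by simp
    then have "out (r + d + 1) \<or> inn (r + d + 1)" using C2[of "r+d"] Suc.prems by simp
    then show ?case using i[of "r + d + 1"] Suc.prems that by simp
  qed
  have iv: "out (r - d)" if "out r" "r < a" "d \<le> r" for r d
    using that(3)
  proof (induction d)
    case 0 then show ?case using that by simp
  next
    case (Suc d)
    then have "out (r - d)" by simp
    then have "out (r - d - 1) \<or> inn (r - d - 1)" using C1[of "r-d"] Suc.prems that a by simp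
    moreover have "r - d - 1 < a" using that(2) by linarith
    ultimately have "out (r - d - 1)" using ii by blast
    then show ?case by simp
  qed
  have claimA: ?thesis if "a < r1" "r1 \<le> M" "inn r1" for r1
  proof -
    have iM: "inn M" using iii[OF that(3) that(1), of "M - r1"] that by simp
    have "out (M - (M-1)) \<or> inn (M - (M-1))" using C4[OF iM] by simp
    then have adj1: "out 1 \<or> inn 1" using M3 by simp
    have a1: "a \<noteq> 1" using adj1 a by auto
    have a0: "a \<noteq> 0"
    proof
      assume "a = 0"
      then have "inn 1" using adj1 i[of 1] M3 by auto
      have e: "1 + (M-2) = M-1" using M3 by arith
      have "inn (1 + (M-2))" by (rule iii) (use \<open>inn 1\<close> M3 \<open>a = 0\<close> in auto)
      then have "inn (M-1)" by (metis e)
      then have "out (M-1-(M-1)) \<or> inn (M-1-(M-1))" using C4[of "M-1"] by simp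
      then show False using a \<open>a = 0\<close> by simp
    qed
    have o1: "out 1" using adj1 ii[of 1] a0 a1 by auto
    have o0: "out 0" using iv[OF o1, of 1] a0 a1 by simp
    have "a \<noteq> M" using C3[OF o1] a by auto
    moreover have "a \<noteq> M - 1" using C3[OF o0] a by auto
    ultimately have aM: "a < M - 1" using a by simp
    have "inn (M-1)" using C3[OF o0] i[of "M-1"] aM by simp
    moreover have "\<not> out (M-1)" "\<not> out M" using i aM by auto
    moreover have "\<not> inn 0" "\<not> inn 1" using ii a0 a1 by auto
    ultimately show ?thesis using o0 o1 iM by simp
  qed
  have caseB: ?thesis if "r1 < a" "out r1" for r1
  proof -
    have o0: "out 0" using iv[OF that(2) that(1), of r1] by simp
    have adjM1: "out (M-1) \<or> inn (M-1)" using C3[OF o0] by simp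
    have "a \<noteq> M - 1" using adjM1 a by auto
    moreover have "a \<noteq> M"
    proof
      assume aM: "a = M"
      then have "out (M-1)" using adjM1 ii[of "M-1"] M3 by auto
      have e: "M - 1 - (M-2) = 1" using M3 by arith
      have "out (M - 1 - (M-2))" by (rule iv) (use \<open>out (M-1)\<close> M3 aM in auto)
      then have "out 1" by (metis e)
      then show False using C3[of 1] a aM by simp
    qed
    ultimately have aM: "a < M - 1" using a by simp
    have "inn (M-1)" using adjM1 i[of "M-1"] aM by auto
    then show ?thesis using claimA[of "M-1"] aM by simp
  qed
  have "r0 \<noteq> a" using r0 a by auto
  then consider "a < r0" | "r0 < a" by linarith
  then show ?thesis
  proof cases
    case 1 then show ?thesis using claimA[of r0] r0 i[of r0] by auto
  next
    case 2 then show ?thesis using caseB[of r0] r0 ii[of r0] by auto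
  qed
qed

end
context lsetup begin

lemma cmb_inst:
  assumes b: "b \<le> 1" and kM: "k = 2*M - 1" and M3: "M \<ge> 3"
  shows "cmb (\<lambda>r. (x, q (b+2*r)) \<in> A) (\<lambda>r. (q (b+2*r), x) \<in> A) M"
proof
  show "3 \<le> M" by fact
next
  fix r assume o: "(x, q (b+2*r)) \<in> A" and r: "1 \<le> r" "r \<le> M"
  have "adjacent A x (q (b+2*r-2))" using R1[OF o] r b kM by simp
  moreover have "b+2*r-2 = b+2*(r-1)" using r by simp
  ultimately show "(x, q (b+2*(r-1))) \<in> A \<or> (q (b+2*(r-1)), x) \<in> A" by (simp add: adjacent_def)
next
  fix r assume o: "(x, q (b+2*r)) \<in> A" and r: "2 \<le> r" "r \<le> M"
  have "adjacent A x (q (b+2*r-4))" using R6[OF o] r b kM by simp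
  moreover have "b+2*r-4 = b+2*(r-2)" using r by simp
  ultimately show "(x, q (b+2*(r-2))) \<in> A \<or> (q (b+2*(r-2)), x) \<in> A" by (simp add: adjacent_def)
next
  fix r assume o: "(x, q (b+2*r)) \<in> A" and r: "r \<le> 1"
  have "adjacent A x (q (b+2*r+k-1))" using R3[OF o] r b by simp
  moreover have "b+2*r+k-1 = b+2*(r+M-1)" using r kM M3 by simp
  ultimately show "(x, q (b+2*(r+M-1))) \<in> A \<or> (q (b+2*(r+M-1)), x) \<in> A" by (simp add: adjacent_def)
next
  fix r assume o: "(q (b+2*r), x) \<in> A" and r: "r + 1 \<le> M"
  have "adjacent A x (q (b+2*r+2))" using R2[OF o] r b kM by simp
  moreover have "b+2*r+2 = b+2*(r+1)" by simp
  ultimately show "(x, q (b+2*(r+1))) \<in> A \<or> (q (b+2*(r+1)), x) \<in> A" by (simp add: adjacent_def)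
next
  fix r assume o: "(q (b+2*r), x) \<in> A" and r: "r + 2 \<le> M"
  have "adjacent A x (q (b+2*r+4))" using R7[OF o] r b kM by simp
  moreover have "b+2*r+4 = b+2*(r+2)" by simp
  ultimately show "(x, q (b+2*(r+2))) \<in> A \<or> (q (b+2*(r+2)), x) \<in> A" by (simp add: adjacent_def)
next
  fix r assume o: "(q (b+2*r), x) \<in> A" and r: "M - 1 \<le> r" "r \<le> M"
  have "adjacent A x (q (b+2*r+1-k))" using R4[OF o] r b kM by simp
  moreover have "b+2*r+1-k = b+2*(r-(M-1))" using r kM M3 by simp
  ultimately show "(x, q (b+2*(r-(M-1)))) \<in> A \<or> (q (b+2*(r-(M-1))), x) \<in> A" by (simp add: adjacent_def)
next
  fix r r' assume i: "(q (b+2*r), x) \<in> A" and o: "(x, q (b+2*r')) \<in> A" and r: "r \<le> M" "r' \<le> M"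
  show "r' \<le> r + 1"
  proof (rule ccontr)
    assume "\<not> r' \<le> r + 1"
    then show False using noshort2[OF i o] r b kM by simp
  qed
qed

lemma part_par:
  assumes b: "b \<le> 1" and kM: "k = 2*M - 1" and M3: "M \<ge> 3"
  defines "S \<equiv> (\<lambda>r. q (b+2*r)) ` {..M}"
  shows "(\<forall>i<k+3. (q i, x) \<notin> A) \<Longrightarrow> (\<exists>y\<in>S. (x,y)\<in>A) \<Longrightarrow> maps_to A {x} S"
    and "(\<forall>i<k+3. (x, q i) \<notin> A) \<Longrightarrow> (\<exists>y\<in>S. (y,x)\<in>A) \<Longrightarrow> maps_to A S {x}"
    and "(\<exists>y\<in>S. adjacent A x y) \<Longrightarrow> (\<forall>y\<in>S. adjacent A x y) \<or>
           (maps_to A {q (b+2*(M-1)), q (b+2*M)} {x} \<and> maps_to A {x} {q b, q (b+2)})"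
proof -
  interpret c: cmb "\<lambda>r. (x, q (b+2*r)) \<in> A" "\<lambda>r. (q (b+2*r), x) \<in> A" M
    by (rule cmb_inst[OF b kM M3])
  have bd: "b + 2*r < k + 3" if "r \<le> M" for r using that b kM M3 by simp
  {
    assume noin: "\<forall>i<k+3. (q i, x) \<notin> A" and ex: "\<exists>y\<in>S. (x,y)\<in>A"
    then obtain r0 where r0: "r0 \<le> M" "(x, q (b+2*r0)) \<in> A" unfolding S_def by auto
    have "\<forall>r\<le>M. (x, q (b+2*r)) \<in> A"
      by (rule c.combI[OF _ r0(2) r0(1)]) (use noin bd in auto)
    then show "maps_to A {x} S" using noin bd unfolding maps_to_def dominates_def no_back_arc_def S_def
      by auto
  }
  {
    assume noout: "\<forall>i<k+3. (x, q i) \<notin> A" and ex: "\<exists>y\<in>S. (y,x)\<in>A"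
    then obtain r0 where r0: "r0 \<le> M" "(q (b+2*r0), x) \<in> A" unfolding S_def by auto
    have "\<forall>r\<le>M. (q (b+2*r), x) \<in> A"
      by (rule c.combW[OF _ r0(2) r0(1)]) (use noout bd in auto)
    then show "maps_to A S {x}" using noout bd unfolding maps_to_def dominates_def no_back_arc_def S_def
      by auto
  }
  {
    assume ex: "\<exists>y\<in>S. adjacent A x y"
    then obtain r0 where r0: "r0 \<le> M" "(x, q (b+2*r0)) \<in> A \<or> (q (b+2*r0), x) \<in> A"
      unfolding S_def adjacent_def by auto
    from c.combB[OF r0]
    show "(\<forall>y\<in>S. adjacent A x y) \<or>
           (maps_to A {q (b+2*(M-1)), q (b+2*M)} {x} \<and> maps_to A {x} {q b, q (b+2)})"
    proof
      assume "\<forall>r\<le>M. (x, q (b+2*r)) \<in> A \<or> (q (b+2*r), x) \<in> A"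
      then show ?thesis unfolding S_def adjacent_def by auto
    next
      assume h: "(x, q (b+2*0)) \<in> A \<and> (q (b+2*0), x) \<notin> A \<and> (x, q (b+2*1)) \<in> A \<and> (q (b+2*1), x) \<notin> A \<and>
        (q (b+2*(M-1)), x) \<in> A \<and> (x, q (b+2*(M-1))) \<notin> A \<and> (q (b+2*M), x) \<in> A \<and> (x, q (b+2*M)) \<notin> A"
      then show ?thesis unfolding maps_to_def dominates_def no_back_arc_def by auto
    qed
  }
qed

end
theorem lemma2p10:
  fixes V :: "'a set" and A :: "('a \<times> 'a) set" and k :: nat
    and u v x :: 'a and P :: "'a list"
  assumes "digraph V A"
    and "odd k" and "k \<ge> 5"
    and "strong V A" and "k_quasi_transitive k V A"
    and "diam V A \<ge> k + 2"
    and "u \<in> V" and "v \<in> V" and "dist V A u v = k + 2"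
    and "path_from_to V A P u v" and "length P = k + 3"
    and "x \<in> V - set P"
  defines "OP \<equiv> {P ! i | i. i \<le> k + 2 \<and> odd i}"
    and "EP \<equiv> {P ! i | i. i \<le> k + 2 \<and> even i}"
    and "I \<equiv> {y \<in> V - set P. no_back_arc A {y} (set P)}"
    and "W \<equiv> {y \<in> V - set P. no_back_arc A (set P) {y}}"
    and "B \<equiv> V - (set P \<union> {y \<in> V - set P. no_back_arc A {y} (set P)} \<union> {y \<in> V - set P. no_back_arc A (set P) {y}})"
  shows
    "(x \<in> I \<longrightarrow>
        ((\<exists>y\<in>EP. (x, y) \<in> A) \<longrightarrow> maps_to A {x} EP) \<and>
        ((\<exists>y\<in>OP. (x, y) \<in> A) \<longrightarrow> maps_to A {x} OP))
   \<and> (x \<in> W \<longrightarrow>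
        ((\<exists>y\<in>EP. (y, x) \<in> A) \<longrightarrow> maps_to A EP {x}) \<and>
        ((\<exists>y\<in>OP. (y, x) \<in> A) \<longrightarrow> maps_to A OP {x}))
   \<and> (x \<in> B \<longrightarrow>
        ((\<exists>y\<in>OP. adjacent A x y) \<longrightarrow>
           (\<forall>y\<in>OP. adjacent A x y) \<or>
           (\<exists>s t. odd s \<and> odd t \<and> 3 \<le> t \<and> t < s \<and> s \<le> k \<and>
              maps_to A {P ! j | j. odd j \<and> s \<le> j \<and> j \<le> k + 2} {x} \<and>
              maps_to A {x} {P ! j | j. odd j \<and> j \<le> t})) \<and>
        ((\<exists>y\<in>EP. adjacent A x y) \<longrightarrow>
           (\<forall>y\<in>EP. adjacent A x y) \<or>
           (\<exists>s t. even s \<and> even t \<and> 2 \<le> t \<and> t < s \<and> s \<le> k - 1 \<and>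
              maps_to A {P ! j | j. even j \<and> s \<le> j \<and> j \<le> k + 1} {x} \<and>
              maps_to A {x} {P ! j | j. even j \<and> j \<le> t})))"
proof -
  have pth: "is_path V A P" and hdP: "hd P = u" and lastP: "last P = v"
    using assms(10) by (auto simp: path_from_to_def)
  have Pne: "P \<noteq> []" using assms(11) by auto
  have P0: "P ! 0 = u" using hdP Pne by (simp add: hd_conv_nth)
  have Pl: "P ! (k+2) = v" using lastP Pne assms(11) by (simp add: last_conv_nth)
  have minl: "k + 3 \<le> length ys" if ys: "path_from_to V A ys (P!0) (P!(k+2))" for ys
  proof (rule ccontr)
    assume "\<not> k + 3 \<le> length ys"
    moreover have "ys \<noteq> []" using ys by (auto simp: path_from_to_def is_path_def)
    ultimately obtain m where m: "length ys = Suc m" "m < k + 2"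
      by (cases ys) auto
    have "\<exists>xs. path_from_to V A xs u v \<and> length xs = Suc m" using ys m P0 Pl by auto
    then have "dist V A u v \<le> m" unfolding dist_def by (rule Least_le)
    then show False using assms(9) m by simp
  qed
  interpret L: lsetup V A k P x
    by unfold_locales (use assms pth minl in auto)
  obtain m where m: "k = 2*m + 1" using assms(2) by (auto elim: oddE)
  define M where "M = m + 1"
  have kM: "k = 2*M - 1" and M3: "M \<ge> 3" using m assms(3) by (auto simp: M_def)
  have qP: "L.q i = P ! i" if "i < k + 3" for i using that by (simp add: L.q_def)
  have EPe: "EP = (\<lambda>r. L.q (0+2*r)) ` {..M}"
  proof
    show "EP \<subseteq> (\<lambda>r. L.q (0+2*r)) ` {..M}"
    proof
      fix y assume "y \<in> EP"
      then obtain i where i: "y = P ! i" "i \<le> k+2" "even i" unfolding EP_def by auto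
      have "i = 0 + 2 * (i div 2)" using i by simp
      moreover have "i div 2 \<le> M"
      proof -
        from i(3) obtain c where c: "i = 2*c" by (elim evenE)
        then have "2*c \<le> 2*M + 1" using i(2) kM M3 by simp
        then show ?thesis using c by simp
      qed
      ultimately have "i = 0 + 2 * (i div 2)" "i div 2 \<le> M" by simp_all
      then show "y \<in> (\<lambda>r. L.q (0+2*r)) ` {..M}" using i qP[of i]
        by (intro rev_image_eqI[of "i div 2"]) auto
    qed
  next
    show "(\<lambda>r. L.q (0+2*r)) ` {..M} \<subseteq> EP"
    proof
      fix y assume "y \<in> (\<lambda>r. L.q (0+2*r)) ` {..M}"
      then obtain r where r: "r \<le> M" "y = L.q (2*r)" by auto
      then show "y \<in> EP" unfolding EP_def using qP[of "2*r"] kM by auto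
    qed
  qed
  have OPe: "OP = (\<lambda>r. L.q (1+2*r)) ` {..M}"
  proof
    show "OP \<subseteq> (\<lambda>r. L.q (1+2*r)) ` {..M}"
    proof
      fix y assume "y \<in> OP"
      then obtain i where i: "y = P ! i" "i \<le> k+2" "odd i" unfolding OP_def by auto
      have "i = 1 + 2 * (i div 2)" "i div 2 \<le> M" using i kM by (auto elim: oddE)
      then show "y \<in> (\<lambda>r. L.q (1+2*r)) ` {..M}" using i qP[of i]
        by (intro rev_image_eqI[of "i div 2"]) auto
    qed
  next
    show "(\<lambda>r. L.q (1+2*r)) ` {..M} \<subseteq> OP"
    proof
      fix y assume "y \<in> (\<lambda>r. L.q (1+2*r)) ` {..M}"
      then obtain r where r: "r \<le> M" "y = L.q (1+2*r)" by auto
      then show "y \<in> OP" unfolding OP_def using qP[of "1+2*r"] kM by auto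
    qed
  qed
  have xVP: "x \<in> V - set P" by fact
  have setP: "z \<in> set P \<longleftrightarrow> (\<exists>i<k+3. z = L.q i)" for z
  proof
    assume "z \<in> set P" then show "\<exists>i<k+3. z = L.q i" by (auto simp: in_set_conv_nth assms(11) qP)
  next
    assume "\<exists>i<k+3. z = L.q i"
    then obtain i where "i < k+3" "z = L.q i" by blast
    then show "z \<in> set P" using qP[of i] nth_mem[of i P] assms(11) by simp
  qed
  have Iiff: "x \<in> I \<longleftrightarrow> (\<forall>i<k+3. (L.q i, x) \<notin> A)"
  proof -
    have nb: "(\<forall>y\<in>set P. (y,x) \<notin> A) \<longleftrightarrow> (\<forall>i<k+3. (L.q i, x) \<notin> A)"
    proof
      assume h: "\<forall>y\<in>set P. (y,x) \<notin> A"
      show "\<forall>i<k+3. (L.q i, x) \<notin> A"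
      proof (intro allI impI)
        fix i assume "i < k+3"
        then have "L.q i \<in> set P" by (intro setP[THEN iffD2]) blast
        then show "(L.q i, x) \<notin> A" using h by blast
      qed
    next
      assume h: "\<forall>i<k+3. (L.q i, x) \<notin> A"
      show "\<forall>y\<in>set P. (y,x) \<notin> A"
      proof
        fix y assume "y \<in> set P"
        then obtain i where "i < k+3" "y = L.q i" using setP[THEN iffD1] by blast
        then show "(y,x) \<notin> A" using h by blast
      qed
    qed
    show ?thesis using xVP nb unfolding I_def no_back_arc_def by auto
  qed
  have Wiff: "x \<in> W \<longleftrightarrow> (\<forall>i<k+3. (x, L.q i) \<notin> A)"
  proof -
    have nb: "(\<forall>y\<in>set P. (x,y) \<notin> A) \<longleftrightarrow> (\<forall>i<k+3. (x, L.q i) \<notin> A)"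
    proof
      assume h: "\<forall>y\<in>set P. (x,y) \<notin> A"
      show "\<forall>i<k+3. (x, L.q i) \<notin> A"
      proof (intro allI impI)
        fix i assume "i < k+3"
        then have "L.q i \<in> set P" by (intro setP[THEN iffD2]) blast
        then show "(x, L.q i) \<notin> A" using h by blast
      qed
    next
      assume h: "\<forall>i<k+3. (x, L.q i) \<notin> A"
      show "\<forall>y\<in>set P. (x,y) \<notin> A"
      proof
        fix y assume "y \<in> set P"
        then obtain i where "i < k+3" "y = L.q i" using setP[THEN iffD1] by blast
        then show "(x,y) \<notin> A" using h by blast
      qed
    qed
    show ?thesis using xVP nb unfolding W_def no_back_arc_def by auto
  qed
  have b0: "(0::nat) \<le> 1" and b1: "(1::nat) \<le> 1" by simp_all
  note pE = L.part_par[of 0 M, OF b0 kM M3, folded EPe]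
  note pO = L.part_par[of 1 M, OF b1 kM M3, folded OPe]
  have oddj: "j = k \<or> j = k + 2" if "odd j" "k \<le> j" "j \<le> k+2" for j
  proof -
    have "j = k \<or> j = k+1 \<or> j = k+2" using that(2,3) by linarith
    moreover have "j \<noteq> k+1" using that(1) assms(2) by auto
    ultimately show ?thesis by blast
  qed
  have evj: "j = k - 1 \<or> j = k + 1" if "even j" "k - 1 \<le> j" "j \<le> k+1" for j
  proof -
    have "j = k - 1 \<or> j = k \<or> j = k+1" using that(2,3) assms(3) by linarith
    moreover have "j \<noteq> k" using that(1) assms(2) by auto
    ultimately show ?thesis by blast
  qed
  have S1: "{P ! j |j. odd j \<and> k \<le> j \<and> j \<le> k + 2} = {L.q (1+2*(M-1)), L.q (1+2*M)}"
  proof -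
    have "1+2*(M-1) = k" "1+2*M = k+2" using kM M3 by auto
    then have "{L.q (1+2*(M-1)), L.q (1+2*M)} = {P ! k, P ! (k+2)}" using qP by simp
    moreover have "{P ! j |j. odd j \<and> k \<le> j \<and> j \<le> k + 2} = {P ! k, P ! (k+2)}"
      using oddj assms(2) by auto
    ultimately show ?thesis by simp
  qed
  have T1: "{P ! j |j. odd j \<and> j \<le> 3} = {L.q 1, L.q (1+2)}"
  proof -
    have "{P ! j |j. odd j \<and> j \<le> 3} = {P ! 1, P ! 3}"
    proof
      show "{P ! j |j. odd j \<and> j \<le> 3} \<subseteq> {P ! 1, P ! 3}"
      proof
        fix y assume "y \<in> {P ! j |j. odd j \<and> j \<le> 3}"
        then obtain j where j: "y = P ! j" "odd j" "j \<le> 3" by auto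
        then have "j = 1 \<or> j = 3" by (cases j; cases "j - 1"; cases "j - 2") auto
        then show "y \<in> {P ! 1, P ! 3}" using j by auto
      qed
    next
      show "{P ! 1, P ! 3} \<subseteq> {P ! j |j. odd j \<and> j \<le> 3}"
      proof -
        have "P ! 1 \<in> {P ! j |j. odd j \<and> j \<le> 3}" by (rule CollectI, rule exI[of _ 1]) simp
        moreover have "P ! 3 \<in> {P ! j |j. odd j \<and> j \<le> 3}" by (rule CollectI, rule exI[of _ 3]) simp
        ultimately show ?thesis by simp
      qed
    qed
    moreover have "L.q 1 = P ! 1" by (rule qP) simp
    moreover have "L.q (1+2) = P ! 3"
    proof -
      have "(1::nat) + 2 = 3" by simp
      moreover have "L.q 3 = P ! 3" by (rule qP) (use assms(3) in simp)
      ultimately show ?thesis by metis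
    qed
    ultimately show ?thesis by metis
  qed
  have S0: "{P ! j |j. even j \<and> k - 1 \<le> j \<and> j \<le> k + 1} = {L.q (0+2*(M-1)), L.q (0+2*M)}"
  proof -
    have "0+2*(M-1) = k - 1" "0+2*M = k+1" using kM M3 by auto
    then have "{L.q (0+2*(M-1)), L.q (0+2*M)} = {P ! (k-1), P ! (k+1)}" using qP by simp
    moreover have "{P ! j |j. even j \<and> k - 1 \<le> j \<and> j \<le> k + 1} = {P ! (k-1), P ! (k+1)}"
    proof
      show "{P ! j |j. even j \<and> k - 1 \<le> j \<and> j \<le> k + 1} \<subseteq> {P ! (k-1), P ! (k+1)}"
        using evj by auto
    next
      have "even (k - 1)" "even (k+1)" using assms(2,3) by auto
      then show "{P ! (k-1), P ! (k+1)} \<subseteq> {P ! j |j. even j \<and> k - 1 \<le> j \<and> j \<le> k + 1}"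
        by auto
    qed
    ultimately show ?thesis by simp
  qed
  have T0: "{P ! j |j. even j \<and> j \<le> 2} = {L.q 0, L.q (0+2)}"
  proof -
    have "{P ! j |j. even j \<and> j \<le> 2} = {P ! 0, P ! 2}"
    proof
      show "{P ! j |j. even j \<and> j \<le> 2} \<subseteq> {P ! 0, P ! 2}"
      proof
        fix y assume "y \<in> {P ! j |j. even j \<and> j \<le> 2}"
        then obtain j where j: "y = P ! j" "even j" "j \<le> 2" by auto
        then have "j = 0 \<or> j = 2" by (cases j; cases "j - 1") auto
        then show "y \<in> {P ! 0, P ! 2}" using j by auto
      qed
    next
      show "{P ! 0, P ! 2} \<subseteq> {P ! j |j. even j \<and> j \<le> 2}"
      proof -
        have "P ! 0 \<in> {P ! j |j. even j \<and> j \<le> 2}" by (rule CollectI, rule exI[of _ 0]) simp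
        moreover have "P ! 2 \<in> {P ! j |j. even j \<and> j \<le> 2}" by (rule CollectI, rule exI[of _ 2]) simp
        ultimately show ?thesis by simp
      qed
    qed
    moreover have "L.q 0 = P ! 0" by (rule qP) simp
    moreover have "L.q (0+2) = P ! 2"
    proof -
      have "(0::nat) + 2 = 2" by simp
      moreover have "L.q 2 = P ! 2" by (rule qP) simp
      ultimately show ?thesis by metis
    qed
    ultimately show ?thesis by metis
  qed
  have part1: "x \<in> I \<longrightarrow>
        ((\<exists>y\<in>EP. (x, y) \<in> A) \<longrightarrow> maps_to A {x} EP) \<and>
        ((\<exists>y\<in>OP. (x, y) \<in> A) \<longrightarrow> maps_to A {x} OP)"
    using pE(1) pO(1) Iiff by auto
  have part2: "x \<in> W \<longrightarrow>
        ((\<exists>y\<in>EP. (y, x) \<in> A) \<longrightarrow> maps_to A EP {x}) \<and>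
        ((\<exists>y\<in>OP. (y, x) \<in> A) \<longrightarrow> maps_to A OP {x})"
    using pE(2) pO(2) Wiff by auto
  have part3O: "(\<exists>y\<in>OP. adjacent A x y) \<longrightarrow>
           (\<forall>y\<in>OP. adjacent A x y) \<or>
           (\<exists>s t. odd s \<and> odd t \<and> 3 \<le> t \<and> t < s \<and> s \<le> k \<and>
              maps_to A {P ! j | j. odd j \<and> s \<le> j \<and> j \<le> k + 2} {x} \<and>
              maps_to A {x} {P ! j | j. odd j \<and> j \<le> t})"
  proof
    assume "\<exists>y\<in>OP. adjacent A x y"
    from pO(3)[OF this] show "(\<forall>y\<in>OP. adjacent A x y) \<or>
           (\<exists>s t. odd s \<and> odd t \<and> 3 \<le> t \<and> t < s \<and> s \<le> k \<and>
              maps_to A {P ! j | j. odd j \<and> s \<le> j \<and> j \<le> k + 2} {x} \<and>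
              maps_to A {x} {P ! j | j. odd j \<and> j \<le> t})"
    proof (elim disjE)
      assume "\<forall>y\<in>OP. adjacent A x y" then show ?thesis by simp
    next
      assume h: "maps_to A {L.q (1 + 2 * (M - 1)), L.q (1 + 2 * M)} {x} \<and> maps_to A {x} {L.q 1, L.q (1 + 2)}"
      have "odd k \<and> odd (3::nat) \<and> 3 \<le> (3::nat) \<and> 3 < k \<and> k \<le> k \<and>
              maps_to A {P ! j | j. odd j \<and> k \<le> j \<and> j \<le> k + 2} {x} \<and>
              maps_to A {x} {P ! j | j. odd j \<and> j \<le> 3}"
        using h S1 T1 assms(2,3) by simp
      then show ?thesis by blast
    qed
  qed
  have part3E: "(\<exists>y\<in>EP. adjacent A x y) \<longrightarrow>
           (\<forall>y\<in>EP. adjacent A x y) \<or>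
           (\<exists>s t. even s \<and> even t \<and> 2 \<le> t \<and> t < s \<and> s \<le> k - 1 \<and>
              maps_to A {P ! j | j. even j \<and> s \<le> j \<and> j \<le> k + 1} {x} \<and>
              maps_to A {x} {P ! j | j. even j \<and> j \<le> t})"
  proof
    assume "\<exists>y\<in>EP. adjacent A x y"
    from pE(3)[OF this] show "(\<forall>y\<in>EP. adjacent A x y) \<or>
           (\<exists>s t. even s \<and> even t \<and> 2 \<le> t \<and> t < s \<and> s \<le> k - 1 \<and>
              maps_to A {P ! j | j. even j \<and> s \<le> j \<and> j \<le> k + 1} {x} \<and>
              maps_to A {x} {P ! j | j. even j \<and> j \<le> t})"
    proof (elim disjE)
      assume "\<forall>y\<in>EP. adjacent A x y" then show ?thesis by simp
    next
      assume h: "maps_to A {L.q (0 + 2 * (M - 1)), L.q (0 + 2 * M)} {x} \<and> maps_to A {x} {L.q 0, L.q (0 + 2)}"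
      have "even (k - 1) \<and> even (2::nat) \<and> 2 \<le> (2::nat) \<and> 2 < k - 1 \<and> k - 1 \<le> k - 1 \<and>
              maps_to A {P ! j | j. even j \<and> k - 1 \<le> j \<and> j \<le> k + 1} {x} \<and>
              maps_to A {x} {P ! j | j. even j \<and> j \<le> 2}"
        using h S0 T0 assms(2,3) by simp
      then show ?thesis by blast
    qed
  qed
  show ?thesis using part1 part2 part3O part3E by blast
qed

end
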